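(* (i) For each $n$, $$\mathrm{Var}[\widetilde H_n]\ \ge\ \sum_{j=1}^{\lfloor 2h_n\rfloor} r_{j,n}(1-p_{j,n})\ \ge\ \sum_{j=1}^{\lfloor 2h_n\rfloor}\widetilde r_{j,n}(1-p_{j,n}),$$ where $\widetilde r_{j,n}=p_{j,n}+2\sum_{l=j+1}^{\lfloor 2h_n\rfloor}p_{l,n}$. (ii) If $\liminf_n \mathrm{Var}[\widetilde H_n]>0$, then as $n\to\infty$ $$\mathrm{Var}[\widetilde H_n]\sim \sum_{j=1}^{\lfloor 2h_n\rfloor}\widetilde r_{j,n}(1-p_{j,n}),$$ and, with $$V_n=\sum_{j=1}^{\lfloor 3\widehat H_n\rfloor}p_{j,n}(1-p_{j,n})+2\sum_{l=2}^{\lfloor 3\widehat H_n\rfloor}p_{l,n}\sum_{j=1}^{l-1}(1-p_{j,n}),$$ we have $V_n/\mathrm{Var}[\widetilde H_n]\to 1$ in probability.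
   Context: $X$ is a positive random variable with survival function $S(x)=P(X>x)$ satisfying $S(x)>0$ for all $x\ge0$. Write $S_-(x)=P(X\ge x)$. For each integer $n\ge1$, the theoretical $h$-index is $$h_n=\sup\{x\ge 0:\ nS_-(x)\ge x\}.$$ Let $X_1,\dots,X_n$ be independent copies of $X$, and write $$\widehat S_n(x)=\frac1n\sum_{i=1}^n\mathbf 1\{X_i>x\},\qquad \widehat S_{n-}(x)=\frac1n\sum_{i=1}^n\mathbf 1\{X_i\ge x\}.$$ The empirical $h$-index is $$\widehat H_n=\sup\{x\ge0:\ n\widehat S_{n-}(x)\ge x\},$$ and $$\widetilde H_n=\sum_{j=1}^n\mathbf 1\{\widehat S_n(j-1)\ge j/n\}.$$ For $1\le j\le n$, $$p_{j,n}=P\bigl(n\widehat S_n(j-1)\ge j\bigr)=\sum_{y=j}^n\binom ny S(j-1)^y\bigl(1-S(j-1)\bigr)^{n-y},$$ and $p_{j,n}=0$ for $j>n$. Finally, $$r_{j,n}=p_{j,n}+2\sum_{l=j+1}^n p_{l,n}.$$ The notation $a_n\sim b_n$ means $a_n/b_n\to1$. *)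

theory Defs
  imports "HOL-Probability.Probability"
begin

text \<open>D is the law of X (a probability measure on the Borel sets of the reals).\<close>

definition surv :: "real measure \<Rightarrow> real \<Rightarrow> real" where
  "surv D x = measure D {x<..}"

definition surv_minus :: "real measure \<Rightarrow> real \<Rightarrow> real" where
  "surv_minus D x = measure D {x..}"

definition h_index :: "real measure \<Rightarrow> nat \<Rightarrow> real" where
  "h_index D n = Sup {x. x \<ge> 0 \<and> real n * surv_minus D x \<ge> x}"

definition p_jn :: "real measure \<Rightarrow> nat \<Rightarrow> nat \<Rightarrow> real" where
  "p_jn D j n = (if 1 \<le> j \<and> j \<le> n then
     (\<Sum>y=j..n. real (n choose y) * surv D (real j - 1) ^ y * (1 - surv D (real j - 1)) ^ (n - y))
   else 0)"

definition r_jn :: "real measure \<Rightarrow> nat \<Rightarrow> nat \<Rightarrow> real" where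
  "r_jn D j n = p_jn D j n + 2 * (\<Sum>l=j+1..n. p_jn D l n)"

definition rt_jn :: "real measure \<Rightarrow> nat \<Rightarrow> nat \<Rightarrow> real" where
  "rt_jn D j n = p_jn D j n + 2 * (\<Sum>l=j+1..nat \<lfloor>2 * h_index D n\<rfloor>. p_jn D l n)"

definition emp_surv :: "(nat \<Rightarrow> 'a \<Rightarrow> real) \<Rightarrow> nat \<Rightarrow> 'a \<Rightarrow> real \<Rightarrow> real" where
  "emp_surv X n \<omega> x = (1 / real n) * real (card {i. i < n \<and> X i \<omega> > x})"

definition emp_surv_minus :: "(nat \<Rightarrow> 'a \<Rightarrow> real) \<Rightarrow> nat \<Rightarrow> 'a \<Rightarrow> real \<Rightarrow> real" where
  "emp_surv_minus X n \<omega> x = (1 / real n) * real (card {i. i < n \<and> X i \<omega> \<ge> x})"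

definition H_hat :: "(nat \<Rightarrow> 'a \<Rightarrow> real) \<Rightarrow> nat \<Rightarrow> 'a \<Rightarrow> real" where
  "H_hat X n \<omega> = Sup {x. x \<ge> 0 \<and> real n * emp_surv_minus X n \<omega> x \<ge> x}"

definition H_tilde :: "(nat \<Rightarrow> 'a \<Rightarrow> real) \<Rightarrow> nat \<Rightarrow> 'a \<Rightarrow> real" where
  "H_tilde X n \<omega> = (\<Sum>j=1..n. if emp_surv X n \<omega> (real j - 1) \<ge> real j / real n then 1 else 0)"

definition V_n :: "real measure \<Rightarrow> (nat \<Rightarrow> 'a \<Rightarrow> real) \<Rightarrow> nat \<Rightarrow> 'a \<Rightarrow> real" where
  "V_n D X n \<omega> = (let m = nat \<lfloor>3 * H_hat X n \<omega>\<rfloor> in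
     (\<Sum>j=1..m. p_jn D j n * (1 - p_jn D j n))
     + 2 * (\<Sum>l=2..m. p_jn D l n * (\<Sum>j=1..l-1. 1 - p_jn D j n)))"

end

theory Submission
  imports Defs "HOL-Real_Asymp.Real_Asymp"
begin

definition FF :: "(nat \<Rightarrow> real) \<Rightarrow> nat \<Rightarrow> real" where
  "FF f N = (\<Sum>l=1..N. (2 * real l - 1) * f l) - (\<Sum>l=1..N. f l)^2"

lemma FF_Suc: "FF f (Suc N) = FF f N + f (Suc N) * (1 - f (Suc N)) + 2 * f (Suc N) * (\<Sum>j=1..N. 1 - f j)"
proof -
  have s: "(\<Sum>j=1..N. 1 - f j) = real N - (\<Sum>j=1..N. f j)"
    by (simp add: sum_subtractf)
  show ?thesis unfolding FF_def s by (simp add: algebra_simps power2_eq_square)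
qed

lemma double_max: fixes f :: "nat \<Rightarrow> real" shows "(\<Sum>j=1..N. \<Sum>l=1..N. f (max j l)) = (\<Sum>l=1..N. (2 * real l - 1) * f l)"
proof (induction N)
  case 0 then show ?case by simp
next
  case (Suc N)
  have a: "(\<Sum>j=1..Suc N. \<Sum>l=1..Suc N. f (max j l)) =
     (\<Sum>j=1..N. \<Sum>l=1..N. f (max j l)) + (\<Sum>j=1..N. f (Suc N)) + (\<Sum>l=1..N. f (Suc N)) + f (Suc N)"
    by (simp add: sum.distrib max_def distrib_right)
  show ?case unfolding a Suc by (simp add: algebra_simps)
qed

lemma r_form: "(\<Sum>j=1..N. (f j + 2 * (\<Sum>l=j+1..N. f l)) * (1 - f j)) = FF f N"
proof (induction N)
  case 0 then show ?case by (simp add: FF_def)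
next
  case (Suc N)
  have a: "(\<Sum>j=1..Suc N. (f j + 2 * (\<Sum>l=j+1..Suc N. f l)) * (1 - f j)) =
     (\<Sum>j=1..N. (f j + 2 * (\<Sum>l=j+1..N. f l)) * (1 - f j)) + (\<Sum>j=1..N. 2 * f (Suc N) * (1 - f j))
       + f (Suc N) * (1 - f (Suc N))"
  proof -
    have "(\<Sum>j=1..Suc N. (f j + 2 * (\<Sum>l=j+1..Suc N. f l)) * (1 - f j)) =
      (\<Sum>j=1..N. (f j + 2 * (\<Sum>l=j+1..Suc N. f l)) * (1 - f j)) + f (Suc N) * (1 - f (Suc N))"
      by simp
    also have "(\<Sum>j=1..N. (f j + 2 * (\<Sum>l=j+1..Suc N. f l)) * (1 - f j)) =
      (\<Sum>j=1..N. (f j + 2 * (\<Sum>l=j+1..N. f l)) * (1 - f j) + 2 * f (Suc N) * (1 - f j))"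
      by (intro sum.cong refl) (auto simp: algebra_simps)
    finally show ?thesis by (simp add: sum.distrib)
  qed
  show ?case unfolding a Suc FF_Suc by (simp add: sum_distrib_left)
qed

lemma V_form: "(\<Sum>j=1..N. f j * (1 - f j)) + 2 * (\<Sum>l=2..N. f l * (\<Sum>j=1..l-1. 1 - f j)) = FF f N"
proof (induction N)
  case 0 then show ?case by (simp add: FF_def)
next
  case (Suc N)
  show ?case
  proof (cases "N = 0")
    case True then show ?thesis by (simp add: FF_def power2_eq_square algebra_simps)
  next
    case False
    have "(\<Sum>l=2..Suc N. f l * (\<Sum>j=1..l-1. 1 - f j)) = (\<Sum>l=2..N. f l * (\<Sum>j=1..l-1. 1 - f j)) + f (Suc N) * (\<Sum>j=1..N. 1 - f j)"
      using False by simp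
    then show ?thesis using Suc by (simp add: FF_Suc algebra_simps)
  qed
qed

lemma FF_step_bounds:
  assumes "\<And>l. 0 \<le> f l" "\<And>l. f l \<le> 1"
  shows "0 \<le> FF f (Suc N) - FF f N" "FF f (Suc N) - FF f N \<le> (2 * real (Suc N) - 1) * f (Suc N)"
proof -
  have s0: "0 \<le> (\<Sum>j=1..N. 1 - f j)" using assms by (intro sum_nonneg) auto
  have s1: "(\<Sum>j=1..N. 1 - f j) \<le> real N"
  proof -
    have "(\<Sum>j=1..N. 1 - f j) \<le> (\<Sum>j=1..N. (1::real))" using assms by (intro sum_mono) auto
    then show ?thesis by simp
  qed
  have f0: "0 \<le> f (Suc N)" "f (Suc N) \<le> 1" using assms by auto
  show "0 \<le> FF f (Suc N) - FF f N" unfolding FF_Suc using f0 s0 by simp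
  have "f (Suc N) * (1 - f (Suc N)) \<le> f (Suc N)" using f0 by (simp add: mult_left_le)
  moreover have "2 * f (Suc N) * (\<Sum>j=1..N. 1 - f j) \<le> 2 * f (Suc N) * real N"
    using f0 s1 by (intro mult_left_mono) auto
  moreover have "(2 * real (Suc N) - 1) * f (Suc N) = f (Suc N) + 2 * f (Suc N) * real N"
    by (simp add: algebra_simps)
  ultimately show "FF f (Suc N) - FF f N \<le> (2 * real (Suc N) - 1) * f (Suc N)"
    unfolding FF_Suc by linarith
qed

lemma FF_bounds:
  assumes "\<And>l. 0 \<le> f l" "\<And>l. f l \<le> 1" "N1 \<le> N2"
  shows "0 \<le> FF f N2 - FF f N1 \<and> FF f N2 - FF f N1 \<le> (\<Sum>l\<in>{N1<..N2}. (2 * real l - 1) * f l)"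
  using assms(3)
proof (induction N2 rule: dec_induct)
  case base then show ?case by simp
next
  case (step k)
  have e: "{N1<..Suc k} = insert (Suc k) {N1<..k}" using step by auto
  show ?case using step FF_step_bounds[of f k, OF assms(1,2)] unfolding e by simp
qed

lemma FF_const:
  assumes "\<And>l. 0 \<le> f l" "\<And>l. f l \<le> 1" "\<And>l. l > n \<Longrightarrow> f l = 0" "n \<le> N"
  shows "FF f N = FF f n"
proof -
  have "(\<Sum>l\<in>{n<..N}. (2 * real l - 1) * f l) = 0" using assms(3) by (intro sum.neutral) auto
  then show ?thesis using FF_bounds[of f, OF assms(1,2) assms(4)] by linarith
qed

lemma sum_trunc_le:
  fixes f :: "nat \<Rightarrow> real"
  assumes "\<And>l. 0 \<le> f l" "\<And>l. l > n \<Longrightarrow> f l = (0::real)"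
  shows "(\<Sum>l=a..b. f l) \<le> (\<Sum>l=a..n. f l)"
proof -
  have "(\<Sum>l=a..b. f l) = (\<Sum>l\<in>{a..b} \<inter> {..n}. f l)"
    using assms(2) by (intro sum.mono_neutral_right) (auto simp: not_le[symmetric])
  also have "\<dots> \<le> (\<Sum>l=a..n. f l)" using assms(1) by (intro sum_mono2) auto
  finally show ?thesis .
qed


context prob_space begin

lemma count_prob:
  fixes X :: "nat \<Rightarrow> 'a \<Rightarrow> real"
  assumes rv: "\<And>i. X i \<in> borel_measurable M"
    and indep: "indep_vars (\<lambda>_. borel) X UNIV"
    and law: "\<And>i. distr M borel (X i) = D"
    and A: "A \<in> sets borel"
  shows "prob {\<omega> \<in> space M. Q (card {i. i < n \<and> X i \<omega> \<in> A})} =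
     (\<Sum>y\<in>{y. y \<le> n \<and> Q y}. real (n choose y) * measure D A ^ y * (1 - measure D A) ^ (n - y))"
proof -
  define s where "s = measure D A"
  have ps: "prob (X i -` A \<inter> space M) = s" for i
    unfolding s_def law[of i, symmetric] using rv A by (simp add: measure_distr)
  have psc: "prob (X i -` (- A) \<inter> space M) = 1 - s" for i
  proof -
    have "X i -` (- A) \<inter> space M = space M - (X i -` A \<inter> space M)" by auto
    moreover have "X i -` A \<inter> space M \<in> events" using rv A by (simp add: measurable_sets)
    ultimately show ?thesis using ps prob_compl by simp
  qed
  have ind: "indep_sets (\<lambda>i. { X i -` B \<inter> space M | B. B \<in> sets borel}) UNIV"
    using indep unfolding indep_vars_def2 by simp
  define F where "F S = {\<omega> \<in> space M. \<forall>i<n. (X i \<omega> \<in> A) = (i \<in> S)}" for S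
  define E where "E S i = (if i \<in> S then X i -` A \<inter> space M else X i -` (- A) \<inter> space M)" for S i
  have FE: "F S = space M \<inter> (\<Inter>i\<in>{..<n}. E S i)" for S
    unfolding F_def E_def by auto
  have Fev: "F S \<in> events" for S
  proof -
    have "\<And>i. E S i \<in> events" unfolding E_def using rv A by (auto simp: measurable_sets)
    then show ?thesis unfolding FE by auto
  qed
  have pF: "prob (F S) = s ^ card S * (1 - s) ^ (n - card S)" if S: "S \<subseteq> {..<n}" for S
  proof (cases "n = 0")
    case True
    then have "F S = space M" unfolding F_def by auto
    moreover have "S = {}" using S True by auto
    ultimately show ?thesis using True by (simp add: prob_space)
  next
    case False
    have "(\<Inter>i\<in>{..<n}. E S i) \<subseteq> space M"
      using False by (intro INF_lower2[of 0]) (auto simp: E_def)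
    then have "space M \<inter> (\<Inter>i\<in>{..<n}. E S i) = (\<Inter>i\<in>{..<n}. E S i)" by blast
    then have "prob (F S) = prob (\<Inter>i\<in>{..<n}. E S i)" unfolding FE by simp
    also have "\<dots> = (\<Prod>i\<in>{..<n}. prob (E S i))"
    proof (rule indep_setsD[OF ind])
      show "\<forall>j\<in>{..<n}. E S j \<in> {X j -` B \<inter> space M |B. B \<in> sets borel}"
      proof
        fix j assume "j \<in> {..<n}"
        show "E S j \<in> {X j -` B \<inter> space M |B. B \<in> sets borel}"
        proof (cases "j \<in> S")
          case True then show ?thesis unfolding E_def using A by auto
        next
          case False then show ?thesis unfolding E_def using borel_comp[OF A] by auto
        qed
      qed
    qed (use False in auto)
    also have "\<dots> = (\<Prod>i\<in>{..<n}. if i \<in> S then s else 1 - s)"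
      unfolding E_def by (intro prod.cong refl) (simp add: ps psc)
    also have "\<dots> = s ^ card ({..<n} \<inter> S) * (1 - s) ^ card ({..<n} - S)"
      by (simp add: prod.If_cases Diff_eq)
    also have "card ({..<n} - S) = n - card S"
      using S by (simp add: card_Diff_subset finite_subset)
    also have "{..<n} \<inter> S = S" using S by auto
    finally show ?thesis .
  qed
  define SS where "SS = {S. S \<subseteq> {..<n} \<and> Q (card S)}"
  have finSS: "finite SS" unfolding SS_def by simp
  have U: "{\<omega> \<in> space M. Q (card {i. i < n \<and> X i \<omega> \<in> A})} = (\<Union>S\<in>SS. F S)"
  proof (intro equalityI subsetI)
    fix \<omega> assume w: "\<omega> \<in> {\<omega> \<in> space M. Q (card {i. i < n \<and> X i \<omega> \<in> A})}"
    define S where "S = {i. i < n \<and> X i \<omega> \<in> A}"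
    have "S \<in> SS" using w unfolding SS_def S_def by auto
    moreover have "\<omega> \<in> F S" using w unfolding F_def S_def by auto
    ultimately show "\<omega> \<in> (\<Union>S\<in>SS. F S)" by auto
  next
    fix \<omega> assume "\<omega> \<in> (\<Union>S\<in>SS. F S)"
    then obtain S where S: "S \<in> SS" "\<omega> \<in> F S" by auto
    then have "{i. i < n \<and> X i \<omega> \<in> A} = S" unfolding F_def SS_def by auto
    then show "\<omega> \<in> {\<omega> \<in> space M. Q (card {i. i < n \<and> X i \<omega> \<in> A})}"
      using S unfolding F_def SS_def by auto
  qed
  have disj: "disjoint_family_on F SS"
    unfolding disjoint_family_on_def F_def SS_def by auto
  have "prob (\<Union>S\<in>SS. F S) = (\<Sum>S\<in>SS. prob (F S))"
    using finSS disj Fev by (intro measure_finite_Union) (auto simp: emeasure_eq_measure)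
  also have "\<dots> = (\<Sum>S\<in>SS. s ^ card S * (1 - s) ^ (n - card S))"
    by (intro sum.cong refl pF) (auto simp: SS_def)
  also have "\<dots> = (\<Sum>y\<in>{y. y \<le> n \<and> Q y}. \<Sum>S\<in>{S \<in> SS. card S = y}. s ^ card S * (1 - s) ^ (n - card S))"
  proof (rule sum.group[symmetric, OF finSS])
    show "finite {y. y \<le> n \<and> Q y}" by simp
    show "card ` SS \<subseteq> {y. y \<le> n \<and> Q y}" unfolding SS_def
      using card_mono[of "{..<n}"] by fastforce
  qed
  also have "\<dots> = (\<Sum>y\<in>{y. y \<le> n \<and> Q y}. real (n choose y) * s ^ y * (1 - s) ^ (n - y))"
  proof (intro sum.cong refl)
    fix y assume y: "y \<in> {y. y \<le> n \<and> Q y}"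
    have e: "{S \<in> SS. card S = y} = {S. S \<subseteq> {..<n} \<and> card S = y}" using y unfolding SS_def by auto
    have "(\<Sum>S\<in>{S \<in> SS. card S = y}. s ^ card S * (1 - s) ^ (n - card S)) =
          (\<Sum>S\<in>{S. S \<subseteq> {..<n} \<and> card S = y}. s ^ y * (1 - s) ^ (n - y))"
      unfolding e by (intro sum.cong refl) auto
    also have "\<dots> = real (n choose y) * (s ^ y * (1 - s) ^ (n - y))"
      by (simp add: n_subsets)
    finally show "(\<Sum>S\<in>{S \<in> SS. card S = y}. s ^ card S * (1 - s) ^ (n - card S)) =
          real (n choose y) * s ^ y * (1 - s) ^ (n - y)" by simp
  qed
  finally show ?thesis unfolding U s_def .
qed

end

lemma up_tail:
  fixes s :: real
  assumes s: "0 \<le> s" "s \<le> 1" and ns: "real n * s \<le> real l / 2"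
  shows "(\<Sum>y=l..n. real (n choose y) * s ^ y * (1 - s) ^ (n - y)) \<le> (exp (1/2) / 2) ^ l"
proof -
  have "(\<Sum>y=l..n. real (n choose y) * s ^ y * (1 - s) ^ (n - y))
      \<le> (\<Sum>y=l..n. real (n choose y) * s ^ y * (1 - s) ^ (n - y) * (2 ^ y / 2 ^ l))"
  proof (intro sum_mono)
    fix y assume y: "y \<in> {l..n}"
    have "(1::real) \<le> 2 ^ y / 2 ^ l" using y by (simp add: power_increasing)
    moreover have "0 \<le> real (n choose y) * s ^ y * (1 - s) ^ (n - y)" using s by simp
    ultimately show "real (n choose y) * s ^ y * (1 - s) ^ (n - y)
        \<le> real (n choose y) * s ^ y * (1 - s) ^ (n - y) * (2 ^ y / 2 ^ l)"
      by (metis mult_left_mono mult.right_neutral)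
  qed
  also have "\<dots> \<le> (\<Sum>y=0..n. real (n choose y) * s ^ y * (1 - s) ^ (n - y) * (2 ^ y / 2 ^ l))"
    using s by (intro sum_mono2) auto
  also have "\<dots> = (\<Sum>y=0..n. real (n choose y) * (2 * s) ^ y * (1 - s) ^ (n - y)) / 2 ^ l"
    by (simp add: sum_divide_distrib power_mult_distrib algebra_simps)
  also have "\<dots> = (2 * s + (1 - s)) ^ n / 2 ^ l"
    by (subst binomial_ring) (simp add: atLeast0AtMost)
  also have "\<dots> = (1 + s) ^ n / 2 ^ l" by (simp add: add.commute)
  also have "\<dots> \<le> exp s ^ n / 2 ^ l"
    using s by (intro divide_right_mono power_mono) (auto simp: exp_ge_add_one_self add.commute)
  also have "\<dots> \<le> exp (real l / 2) / 2 ^ l"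
  proof -
    have "exp s ^ n = exp (real n * s)" by (simp add: exp_of_nat_mult)
    also have "\<dots> \<le> exp (real l / 2)" using ns by simp
    finally show ?thesis by (intro divide_right_mono) auto
  qed
  also have "\<dots> = (exp (1/2) / 2) ^ l"
    using exp_of_nat_mult[of l "1/2"] by (simp add: power_divide)
  finally show ?thesis .
qed

lemma low_tail:
  fixes s a :: real
  assumes s: "0 \<le> s" "s \<le> 1"
  shows "(\<Sum>y\<in>{y. y \<le> n \<and> real y < a}. real (n choose y) * s ^ y * (1 - s) ^ (n - y)) \<le> exp (a/3 - real n * s / 4)"
proof -
  have e3: "exp (-1/3) \<le> (3/4::real)"
  proof -
    have "4/3 \<le> exp (1/3::real)" using exp_ge_add_one_self[of "1/3::real"] by simp
    then have "1 / exp (1/3::real) \<le> 3/4" by (simp add: field_simps)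
    then show ?thesis by (simp add: exp_minus inverse_eq_divide)
  qed
  have "(\<Sum>y\<in>{y. y \<le> n \<and> real y < a}. real (n choose y) * s ^ y * (1 - s) ^ (n - y))
      \<le> (\<Sum>y\<in>{y. y \<le> n \<and> real y < a}. real (n choose y) * s ^ y * (1 - s) ^ (n - y) * (exp (a/3) * (3/4) ^ y))"
  proof (intro sum_mono)
    fix y assume y: "y \<in> {y. y \<le> n \<and> real y < a}"
    have "exp (- real y / 3) \<le> (3/4::real) ^ y"
    proof -
      have "exp (- real y / 3) = exp (-1/3) ^ y" by (simp add: exp_of_nat_mult[symmetric])
      also have "\<dots> \<le> (3/4) ^ y" using e3 by (intro power_mono) auto
      finally show ?thesis .
    qed
    then have "exp (a/3) * exp (- real y / 3) \<le> exp (a/3) * (3/4::real) ^ y" by simp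
    moreover have "1 \<le> exp (a/3) * exp (- real y / 3)" using y by (simp add: exp_add[symmetric])
    ultimately have "(1::real) \<le> exp (a/3) * (3/4) ^ y" by linarith
    moreover have "0 \<le> real (n choose y) * s ^ y * (1 - s) ^ (n - y)" using s by simp
    ultimately show "real (n choose y) * s ^ y * (1 - s) ^ (n - y)
        \<le> real (n choose y) * s ^ y * (1 - s) ^ (n - y) * (exp (a/3) * (3/4) ^ y)"
      by (metis mult_left_mono mult.right_neutral)
  qed
  also have "\<dots> \<le> (\<Sum>y=0..n. real (n choose y) * s ^ y * (1 - s) ^ (n - y) * (exp (a/3) * (3/4) ^ y))"
    using s by (intro sum_mono2) auto
  also have "\<dots> = exp (a/3) * (3/4 * s + (1 - s)) ^ n"
  proof -
    define c :: real where "c = 3/4"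
    have "(\<Sum>y=0..n. real (n choose y) * s ^ y * (1 - s) ^ (n - y) * (exp (a/3) * c ^ y))
       = exp (a/3) * (\<Sum>y=0..n. real (n choose y) * (c * s) ^ y * (1 - s) ^ (n - y))"
      unfolding sum_distrib_left by (intro sum.cong refl) (simp add: power_mult_distrib mult_ac)
    also have "\<dots> = exp (a/3) * (c * s + (1 - s)) ^ n"
      by (subst binomial_ring) (simp add: atLeast0AtMost)
    finally show ?thesis unfolding c_def .
  qed
  also have "\<dots> \<le> exp (a/3) * exp (- s / 4) ^ n"
  proof -
    have "3/4 * s + (1 - s) = 1 + (- s / 4)" by simp
    also have "\<dots> \<le> exp (- s/4)" by (rule exp_ge_add_one_self)
    finally show ?thesis using s by (intro mult_left_mono power_mono) auto
  qed
  also have "\<dots> = exp (a/3 - real n * s / 4)"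
  proof -
    have "exp (- s / 4) ^ n = exp (real n * (- s / 4))" using exp_of_nat_mult[of n "-s/4"] by simp
    then show ?thesis by (simp add: exp_add[symmetric])
  qed
  finally show ?thesis .
qed


lemma card_sum_ind: fixes n :: nat shows "real (card {i. i < n \<and> X i \<omega> \<in> A}) = (\<Sum>i<n. indicator A (X i \<omega>) :: real)"
proof -
  have "real (card {i. i < n \<and> X i \<omega> \<in> A}) = real (card ({..<n} \<inter> {i. X i \<omega> \<in> A}))"
    by (simp add: Int_def conj_commute lessThan_def)
  also have "\<dots> = (\<Sum>i\<in>{..<n} \<inter> {i. X i \<omega> \<in> A}. 1::real)" by simp
  also have "\<dots> = (\<Sum>i<n. if X i \<omega> \<in> A then 1 else 0)"
    by (simp only: sum.inter_restrict[OF finite_lessThan] mem_Collect_eq)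
  also have "\<dots> = (\<Sum>i<n. indicator A (X i \<omega>))"
    by (intro sum.cong refl) (simp add: indicator_def)
  finally show ?thesis .
qed

context prob_space begin

lemma variance_Htilde:
  fixes X :: "nat \<Rightarrow> 'a \<Rightarrow> real"
  assumes rv: "\<And>i. X i \<in> borel_measurable M"
    and indep: "indep_vars (\<lambda>_. borel) X UNIV"
    and law: "\<And>i. distr M borel (X i) = D"
    and n: "1 \<le> n"
  shows "variance (H_tilde X n) = FF (\<lambda>j. p_jn D j n) n"
    and "\<And>j. 1 \<le> j \<Longrightarrow> j \<le> n \<Longrightarrow> p_jn D j n = prob {\<omega> \<in> space M. j \<le> card {i. i < n \<and> X i \<omega> \<in> {real j - 1<..}}}"
proof -
  define c where "c j \<omega> = card {i. i < n \<and> X i \<omega> \<in> {real j - 1<..}}" for j \<omega>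
  define B where "B j \<omega> = (if j \<le> c j \<omega> then 1 else 0::real)" for j \<omega>
  have pj: "p_jn D j n = prob {\<omega> \<in> space M. j \<le> c j \<omega>}" if j: "1 \<le> j" "j \<le> n" for j
  proof -
    have "prob {\<omega> \<in> space M. j \<le> c j \<omega>} =
       (\<Sum>y\<in>{y. y \<le> n \<and> j \<le> y}. real (n choose y) * measure D {real j - 1<..} ^ y * (1 - measure D {real j - 1<..}) ^ (n - y))"
      unfolding c_def by (rule count_prob[OF rv indep law]) auto
    also have "{y. y \<le> n \<and> j \<le> y} = {j..n}" by auto
    finally show ?thesis using j unfolding p_jn_def surv_def by simp
  qed
  then show "\<And>j. 1 \<le> j \<Longrightarrow> j \<le> n \<Longrightarrow> p_jn D j n = prob {\<omega> \<in> space M. j \<le> card {i. i < n \<and> X i \<omega> \<in> {real j - 1<..}}}"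
    unfolding c_def by simp
  have HT: "H_tilde X n = (\<lambda>\<omega>. \<Sum>j=1..n. B j \<omega>)"
  proof
    fix \<omega>
    have "(if emp_surv X n \<omega> (real j - 1) \<ge> real j / real n then 1 else 0) = B j \<omega>" for j
    proof -
      have "{i. i < n \<and> X i \<omega> > real j - 1} = {i. i < n \<and> X i \<omega> \<in> {real j - 1<..}}" by auto
      then have "emp_surv X n \<omega> (real j - 1) \<ge> real j / real n \<longleftrightarrow> real j \<le> real (c j \<omega>)"
        unfolding emp_surv_def c_def using n by (simp add: field_simps)
      then show ?thesis unfolding B_def by simp
    qed
    then show "H_tilde X n \<omega> = (\<Sum>j=1..n. B j \<omega>)" unfolding H_tilde_def by simp
  qed
  have Bmeas: "B j \<in> borel_measurable M" for j
  proof -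
    have "B j = (\<lambda>\<omega>. if real j \<le> (\<Sum>i<n. indicator {real j - 1<..} (X i \<omega>) :: real) then 1 else 0)"
      unfolding B_def c_def card_sum_ind[symmetric] by (auto simp: fun_eq_iff)
    also have "\<dots> \<in> borel_measurable M" using rv by measurable
    finally show ?thesis .
  qed
  have Bint: "integrable M (B j)" for j
    by (rule integrable_const_bound[where B=1]) (auto simp: B_def Bmeas)
  have EB: "expectation (B j) = p_jn D j n" if "1 \<le> j" "j \<le> n" for j
  proof -
    have "B j = indicator {\<omega>. j \<le> c j \<omega>}" unfolding B_def by (auto simp: fun_eq_iff)
    then have "expectation (B j) = prob ({\<omega>. j \<le> c j \<omega>} \<inter> space M)" by simp
    also have "{\<omega>. j \<le> c j \<omega>} \<inter> space M = {\<omega> \<in> space M. j \<le> c j \<omega>}" by auto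
    finally show ?thesis using pj that by simp
  qed
  have BB: "B j \<omega> * B l \<omega> = B (max j l) \<omega>" for j l \<omega>
  proof -
    have mono: "c b \<omega> \<le> c a \<omega>" if "a \<le> b" for a b
      unfolding c_def using that by (intro card_mono) auto
    show ?thesis unfolding B_def using mono[of j l] mono[of l j] by (cases "j \<le> l") (auto simp: max_def)
  qed
  have sq: "(\<lambda>\<omega>. (H_tilde X n \<omega>)\<^sup>2) = (\<lambda>\<omega>. \<Sum>j=1..n. \<Sum>l=1..n. B (max j l) \<omega>)"
    unfolding HT power2_eq_square sum_product BB ..
  have V: "variance (H_tilde X n) = expectation (\<lambda>\<omega>. (H_tilde X n \<omega>)\<^sup>2) - (expectation (H_tilde X n))\<^sup>2"
  proof (rule variance_eq)
    show "integrable M (H_tilde X n)" unfolding HT by (auto simp: Bint)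
    show "integrable M (\<lambda>\<omega>. (H_tilde X n \<omega>)\<^sup>2)" unfolding sq by (auto simp: Bint)
  qed
  have E1: "expectation (\<lambda>\<omega>. (H_tilde X n \<omega>)\<^sup>2) = (\<Sum>j=1..n. \<Sum>l=1..n. p_jn D (max j l) n)"
    unfolding sq by (simp add: Bint EB max_def)
  have E2: "expectation (H_tilde X n) = (\<Sum>j=1..n. p_jn D j n)"
    unfolding HT by (simp add: Bint EB)
  show "variance (H_tilde X n) = FF (\<lambda>j. p_jn D j n) n"
  proof -
    have "variance (H_tilde X n) = (\<Sum>j=1..n. \<Sum>l=1..n. p_jn D (max j l) n) - (\<Sum>j=1..n. p_jn D j n)\<^sup>2"
      using V E1 E2 by simp
    then show ?thesis using double_max[of "\<lambda>l. p_jn D l n" n] by (simp add: FF_def)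
  qed
qed

end

lemma Sm_bounds: "prob_space D \<Longrightarrow> 0 \<le> surv_minus D x \<and> surv_minus D x \<le> 1"
  unfolding surv_minus_def by (simp add: prob_space.prob_le_1)

lemma S_bounds: "prob_space D \<Longrightarrow> 0 \<le> surv D x \<and> surv D x \<le> 1"
  unfolding surv_def by (simp add: prob_space.prob_le_1)

lemma hset_bdd: assumes "prob_space D" shows "bdd_above {x. x \<ge> 0 \<and> real n * surv_minus D x \<ge> x}"
proof (rule bdd_aboveI[where M="real n"])
  fix x assume "x \<in> {x. x \<ge> 0 \<and> real n * surv_minus D x \<ge> x}"
  then have "x \<le> real n * surv_minus D x" by auto
  also have "\<dots> \<le> real n" using Sm_bounds[OF assms, of x] by (simp add: mult_left_le)
  finally show "x \<le> real n" .
qed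

lemma h_ge: assumes "prob_space D" "0 \<le> x" "x \<le> real n * surv_minus D x" shows "x \<le> h_index D n"
  unfolding h_index_def using assms by (intro cSup_upper hset_bdd) auto

lemma h_nonneg: assumes "prob_space D" shows "0 \<le> h_index D n"
  using h_ge[OF assms, of 0] Sm_bounds[OF assms] by simp

lemma h_gt: assumes "prob_space D" "h_index D n < x" shows "real n * surv_minus D x < x"
  using h_ge[OF assms(1), of x n] assms h_nonneg[OF assms(1), of n] by linarith

lemma h_lt: assumes "prob_space D" "y < h_index D n"
  obtains x where "y < x" "0 \<le> x" "x \<le> real n * surv_minus D x"
proof -
  have ne: "{x. x \<ge> 0 \<and> real n * surv_minus D x \<ge> x} \<noteq> {}"
    using Sm_bounds[OF assms(1)] by (auto intro!: exI[of _ 0])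
  show ?thesis using assms(2) unfolding h_index_def
    by (rule less_cSupE[OF _ ne]) (use that in auto)
qed

lemma Sm_anti: assumes "prob_space D" "sets D = sets borel" "x \<le> y"
  shows "surv_minus D y \<le> surv_minus D x"
  unfolding surv_minus_def using assms
  by (intro finite_measure.finite_measure_mono prob_space.finite_measure) auto

lemma S_le_Sm: assumes "prob_space D" "sets D = sets borel" "y \<le> x"
  shows "surv D x \<le> surv_minus D y"
  unfolding surv_minus_def surv_def using assms
  by (intro finite_measure.finite_measure_mono prob_space.finite_measure) auto

lemma h_tendsto:
  assumes PD: "prob_space D" and SD: "sets D = sets borel"
    and Spos: "\<And>x. x \<ge> 0 \<Longrightarrow> surv D x > 0"
  shows "filterlim (h_index D) at_top sequentially"
  unfolding filterlim_at_top
proof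
  fix Z :: real
  define K where "K = max Z 0"
  define s where "s = surv_minus D K"
  have "surv D K \<le> s" unfolding s_def by (rule S_le_Sm[OF PD SD]) simp
  moreover have "surv D K > 0" using Spos K_def by simp
  ultimately have s: "s > 0" by simp
  show "\<forall>\<^sub>F n in sequentially. Z \<le> h_index D n"
    unfolding eventually_sequentially
  proof (intro exI allI impI)
    fix n assume "nat \<lceil>K / s\<rceil> \<le> n"
    then have "K / s \<le> real n" by linarith
    then have "K \<le> real n * surv_minus D K" using s unfolding s_def by (simp add: field_simps)
    then have "K \<le> h_index D n" using h_ge[OF PD, of K n] by (simp add: K_def)
    then show "Z \<le> h_index D n" unfolding K_def by simp
  qed
qed


lemma tail_bound:
  fixes a :: "nat \<Rightarrow> real"
  assumes "summable a" "\<And>l. 0 \<le> a l" "m \<le> n"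
  shows "(\<Sum>l\<in>{m<..n}. a l) \<le> suminf a - (\<Sum>l<Suc m. a l)"
proof -
  have e: "{..<Suc n} = {..<Suc m} \<union> {m<..n}" using assms(3) by auto
  have "(\<Sum>l<Suc n. a l) = (\<Sum>l<Suc m. a l) + (\<Sum>l\<in>{m<..n}. a l)"
    unfolding e by (rule sum.union_disjoint) auto
  moreover have "(\<Sum>l<Suc n. a l) \<le> suminf a" using assms by (intro sum_le_suminf) auto
  ultimately show ?thesis by linarith
qed

lemma tail_nonneg:
  fixes a :: "nat \<Rightarrow> real"
  assumes "summable a" "\<And>l. 0 \<le> a l"
  shows "0 \<le> suminf a - (\<Sum>l<k. a l)"
  using sum_le_suminf[of a "{..<k}"] assms by auto

lemma tail_lim:
  fixes a :: "nat \<Rightarrow> real"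
  assumes "summable a"
  shows "(\<lambda>k. suminf a - (\<Sum>l<k. a l)) \<longlonglongrightarrow> 0"
proof -
  have "(\<lambda>k. suminf a - (\<Sum>l<k. a l)) \<longlonglongrightarrow> suminf a - suminf a"
    by (intro tendsto_intros summable_LIMSEQ assms)
  then show ?thesis by simp
qed

lemma q_facts: "0 < exp (1/2) / (2::real)" "exp (1/2) / (2::real) < 1"
proof -
  show "0 < exp (1/2) / (2::real)" by simp
  have "exp (1/2) * exp (1/2) = exp (1::real)" by (simp add: exp_add[symmetric])
  also have "\<dots> \<le> 3" by (rule exp_le)
  finally have sq: "exp (1/2::real) * exp (1/2) \<le> 3" .
  have "exp (1/2::real) < 2"
  proof (rule ccontr)
    assume "\<not> exp (1/2::real) < 2"
    then have "2 * 2 \<le> exp (1/2::real) * exp (1/2)" by (intro mult_mono) auto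
    then show False using sq by simp
  qed
  then show "exp (1/2) / (2::real) < 1" by simp
qed

lemma a_summable: "summable (\<lambda>l. 2 * ((exp (1/2) / (2::real)) ^ l * real l))"
proof -
  have "norm (exp (1/2) / (2::real)) < 1" using q_facts by simp
  from geometric_sums_times_n[OF this] show ?thesis
    by (intro summable_mult) (auto dest: sums_summable)
qed

lemma exp_lim: "((\<lambda>x::real. exp (-(11/720) * x)) \<longlongrightarrow> 0) at_top"
  by real_asymp


lemma p_bounds:
  fixes X :: "nat \<Rightarrow> 'a \<Rightarrow> real"
  assumes M: "prob_space M"
    and rv: "\<And>i. X i \<in> borel_measurable M"
    and indep: "prob_space.indep_vars M (\<lambda>_. borel) X UNIV"
    and law: "\<And>i. distr M borel (X i) = D"
  shows "0 \<le> p_jn D j n \<and> p_jn D j n \<le> 1"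
proof (cases "1 \<le> j \<and> j \<le> n")
  case True
  then have "p_jn D j n = measure M {\<omega> \<in> space M. j \<le> card {i. i < n \<and> X i \<omega> \<in> {real j - 1<..}}}"
    using prob_space.variance_Htilde(2)[OF M rv indep law, of n j] by auto
  then show ?thesis using prob_space.prob_le_1[OF M] by simp
next
  case False then show ?thesis unfolding p_jn_def by auto
qed

lemma p_zero: "j > n \<Longrightarrow> p_jn D j n = 0"
  unfolding p_jn_def by auto

lemma p_small:
  assumes PD: "prob_space D" and SD: "sets D = sets borel"
    and l: "2 * h_index D n < real l" "2 \<le> l"
  shows "p_jn D l n \<le> (exp (1/2) / 2) ^ l"
proof (cases "l \<le> n")
  case False
  then show ?thesis unfolding p_jn_def using q_facts by auto
next
  case True
  define s where "s = surv D (real l - 1)"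
  have s01: "0 \<le> s" "s \<le> 1" using S_bounds[OF PD] unfolding s_def by auto
  have "s \<le> surv_minus D (real l / 2)" unfolding s_def using l by (intro S_le_Sm[OF PD SD]) auto
  then have "real n * s \<le> real n * surv_minus D (real l / 2)" by (intro mult_left_mono) auto
  also have "\<dots> < real l / 2" using l by (intro h_gt[OF PD]) auto
  finally have ns: "real n * s \<le> real l / 2" by simp
  have "p_jn D l n = (\<Sum>y=l..n. real (n choose y) * s ^ y * (1 - s) ^ (n - y))"
    unfolding p_jn_def s_def using True l by auto
  also have "\<dots> \<le> (exp (1/2) / 2) ^ l" by (rule up_tail[OF s01 ns])
  finally show ?thesis .
qed


theorem theorem4p1:
  fixes M :: "'a measure" and X :: "nat \<Rightarrow> 'a \<Rightarrow> real" and D :: "real measure"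
  assumes M: "prob_space M"
    and rv: "\<And>i. X i \<in> borel_measurable M"
    and indep: "prob_space.indep_vars M (\<lambda>_. borel) X UNIV"
    and law: "\<And>i. distr M borel (X i) = D"
    and pos: "AE x in D. 0 < x"
    and Spos: "\<And>x. x \<ge> 0 \<Longrightarrow> surv D x > 0"
  shows
    "(\<forall>n\<ge>1.
        prob_space.variance M (H_tilde X n)
          \<ge> (\<Sum>j=1..nat \<lfloor>2 * h_index D n\<rfloor>. r_jn D j n * (1 - p_jn D j n))
      \<and> (\<Sum>j=1..nat \<lfloor>2 * h_index D n\<rfloor>. r_jn D j n * (1 - p_jn D j n))
          \<ge> (\<Sum>j=1..nat \<lfloor>2 * h_index D n\<rfloor>. rt_jn D j n * (1 - p_jn D j n)))
     \<and> (liminf (\<lambda>n. ereal (prob_space.variance M (H_tilde X n))) > 0 \<longrightarrow>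
        ((\<lambda>n. prob_space.variance M (H_tilde X n) /
               (\<Sum>j=1..nat \<lfloor>2 * h_index D n\<rfloor>. rt_jn D j n * (1 - p_jn D j n)))
           \<longlonglongrightarrow> 1)
        \<and> (\<forall>\<epsilon>>0. (\<lambda>n. measure M {\<omega>\<in>space M.
              \<bar>V_n D X n \<omega> / prob_space.variance M (H_tilde X n) - 1\<bar> > \<epsilon>}) \<longlonglongrightarrow> 0))"
proof -
  interpret P: prob_space M by (rule M)
  have PD: "prob_space D" using P.prob_space_distr[OF rv[of 0]] law[of 0] by simp
  have SD: "sets D = sets borel" using law[of 0, symmetric] by simp
  have pb: "\<And>j n. 0 \<le> p_jn D j n \<and> p_jn D j n \<le> 1" by (rule p_bounds[OF M rv indep law])
  have VarF: "\<And>n. 1 \<le> n \<Longrightarrow> P.variance (H_tilde X n) = FF (\<lambda>j. p_jn D j n) n"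
    by (rule P.variance_Htilde(1)[OF rv indep law])
  have rtF: "(\<Sum>j=1..nat \<lfloor>2 * h_index D n\<rfloor>. rt_jn D j n * (1 - p_jn D j n)) = FF (\<lambda>j. p_jn D j n) (nat \<lfloor>2 * h_index D n\<rfloor>)" for n
    unfolding rt_jn_def using r_form[of "\<lambda>j. p_jn D j n" "nat \<lfloor>2 * h_index D n\<rfloor>"] by simp
  have part1: "\<forall>n\<ge>1.
        P.variance (H_tilde X n)
          \<ge> (\<Sum>j=1..nat \<lfloor>2 * h_index D n\<rfloor>. r_jn D j n * (1 - p_jn D j n))
      \<and> (\<Sum>j=1..nat \<lfloor>2 * h_index D n\<rfloor>. r_jn D j n * (1 - p_jn D j n))
          \<ge> (\<Sum>j=1..nat \<lfloor>2 * h_index D n\<rfloor>. rt_jn D j n * (1 - p_jn D j n))"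
  proof (intro allI impI conjI)
    fix n :: nat assume n: "1 \<le> n"
    have f0: "\<And>l. 0 \<le> p_jn D l n" "\<And>l. p_jn D l n \<le> 1" using pb by auto
    have rnn: "0 \<le> r_jn D j n * (1 - p_jn D j n)" for j
      unfolding r_jn_def using f0 by (intro mult_nonneg_nonneg add_nonneg_nonneg sum_nonneg) auto
    have rz: "r_jn D j n * (1 - p_jn D j n) = 0" if "j > n" for j
      unfolding r_jn_def using that by (simp add: p_zero)
    have "(\<Sum>j=1..nat \<lfloor>2 * h_index D n\<rfloor>. r_jn D j n * (1 - p_jn D j n)) \<le> (\<Sum>j=1..n. r_jn D j n * (1 - p_jn D j n))"
      by (rule sum_trunc_le) (use rnn rz in auto)
    also have "\<dots> = FF (\<lambda>j. p_jn D j n) n"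
      unfolding r_jn_def using r_form[of "\<lambda>j. p_jn D j n" n] by simp
    also have "\<dots> = P.variance (H_tilde X n)" using VarF n by simp
    finally show "P.variance (H_tilde X n) \<ge> (\<Sum>j=1..nat \<lfloor>2 * h_index D n\<rfloor>. r_jn D j n * (1 - p_jn D j n))" .
    show "(\<Sum>j=1..nat \<lfloor>2 * h_index D n\<rfloor>. rt_jn D j n * (1 - p_jn D j n)) \<le> (\<Sum>j=1..nat \<lfloor>2 * h_index D n\<rfloor>. r_jn D j n * (1 - p_jn D j n))"
    proof (rule sum_mono)
      fix j
      have "(\<Sum>l=j+1..nat \<lfloor>2 * h_index D n\<rfloor>. p_jn D l n) \<le> (\<Sum>l=j+1..n. p_jn D l n)"
        by (rule sum_trunc_le) (use f0 p_zero in auto)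
      then have "rt_jn D j n \<le> r_jn D j n" unfolding rt_jn_def r_jn_def by simp
      then show "rt_jn D j n * (1 - p_jn D j n) \<le> r_jn D j n * (1 - p_jn D j n)"
        using f0 by (intro mult_right_mono) auto
    qed
  qed
  have part2: "liminf (\<lambda>n. ereal (P.variance (H_tilde X n))) > 0 \<longrightarrow>
        ((\<lambda>n. P.variance (H_tilde X n) /
               (\<Sum>j=1..nat \<lfloor>2 * h_index D n\<rfloor>. rt_jn D j n * (1 - p_jn D j n)))
           \<longlonglongrightarrow> 1)
        \<and> (\<forall>\<epsilon>>0. (\<lambda>n. measure M {\<omega>\<in>space M.
              \<bar>V_n D X n \<omega> / P.variance (H_tilde X n) - 1\<bar> > \<epsilon>}) \<longlonglongrightarrow> 0)"
  proof
    assume L: "liminf (\<lambda>n. ereal (P.variance (H_tilde X n))) > 0"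
    obtain c where c: "0 < c" "ereal c < liminf (\<lambda>n. ereal (P.variance (H_tilde X n)))"
      using ereal_dense2[OF L] by auto
    have evc: "eventually (\<lambda>n. c < P.variance (H_tilde X n)) sequentially"
      using less_LiminfD[OF c(2)] by simp
    define q where "q = exp (1/2) / (2::real)"
    define a where "a l = 2 * (q ^ l * real l)" for l
    have asum: "summable a" unfolding a_def q_def by (rule a_summable)
    have anonneg: "\<And>l. 0 \<le> a l" unfolding a_def q_def by simp
    define T where "T k = suminf a - (\<Sum>l<k. a l)" for k
    define mm where "mm n = nat \<lfloor>2 * h_index D n\<rfloor>" for n
    have htop: "filterlim (h_index D) at_top sequentially" by (rule h_tendsto[OF PD SD Spos])
    have mmtop: "filterlim (\<lambda>n. mm n + 1) at_top sequentially"
      unfolding filterlim_at_top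
    proof
      fix Z :: nat
      have "\<forall>\<^sub>F n in sequentially. real Z \<le> h_index D n" using htop by (simp add: filterlim_at_top)
      then show "\<forall>\<^sub>F n in sequentially. Z \<le> mm n + 1"
      proof (rule eventually_mono)
        fix n assume "real Z \<le> h_index D n"
        then have "real Z \<le> 2 * h_index D n" using h_nonneg[OF PD, of n] by linarith
        then have "int Z \<le> \<lfloor>2 * h_index D n\<rfloor>" by (simp add: le_floor_iff)
        then show "Z \<le> mm n + 1" unfolding mm_def by linarith
      qed
    qed
    have Tlim: "(\<lambda>n. T (mm n + 1)) \<longlonglongrightarrow> 0"
      using filterlim_compose[OF tail_lim[OF asum] mmtop] unfolding T_def by simp
    have ev1: "eventually (\<lambda>n. 1 \<le> n \<and> 1 \<le> h_index D n) sequentially"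
      using eventually_ge_at_top[of "1::nat"] htop
      by (auto simp: filterlim_at_top intro: eventually_conj)
    have key: "0 \<le> FF (\<lambda>j. p_jn D j n) n - FF (\<lambda>j. p_jn D j n) (mm n) \<and>
               FF (\<lambda>j. p_jn D j n) n - FF (\<lambda>j. p_jn D j n) (mm n) \<le> T (mm n + 1)"
      if n: "1 \<le> n" "1 \<le> h_index D n" for n
    proof -
      have f0: "\<And>l. 0 \<le> p_jn D l n" "\<And>l. p_jn D l n \<le> 1" using pb by auto
      show ?thesis
      proof (cases "mm n \<le> n")
        case False
        then have "FF (\<lambda>j. p_jn D j n) (mm n) = FF (\<lambda>j. p_jn D j n) n"
          by (intro FF_const) (auto simp: p_zero f0)
        then show ?thesis using tail_nonneg[OF asum anonneg, of "mm n + 1"] unfolding T_def by simp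
      next
        case True
        have B: "0 \<le> FF (\<lambda>j. p_jn D j n) n - FF (\<lambda>j. p_jn D j n) (mm n) \<and>
                 FF (\<lambda>j. p_jn D j n) n - FF (\<lambda>j. p_jn D j n) (mm n) \<le> (\<Sum>l\<in>{mm n<..n}. (2 * real l - 1) * p_jn D l n)"
          by (rule FF_bounds) (use f0 True in auto)
        have "(\<Sum>l\<in>{mm n<..n}. (2 * real l - 1) * p_jn D l n) \<le> (\<Sum>l\<in>{mm n<..n}. a l)"
        proof (rule sum_mono)
          fix l assume l: "l \<in> {mm n<..n}"
          have h0: "0 \<le> h_index D n" by (rule h_nonneg[OF PD])
          have "\<lfloor>2 * h_index D n\<rfloor> < int l" using l h0 unfolding mm_def by auto
          then have l1: "2 * h_index D n < real l" by (simp add: floor_less_iff)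
          then have l2: "2 \<le> l" using n by linarith
          have pl: "p_jn D l n \<le> q ^ l" unfolding q_def by (rule p_small[OF PD SD l1 l2])
          have "(2 * real l - 1) * p_jn D l n \<le> (2 * real l) * p_jn D l n"
            using f0 by (intro mult_right_mono) auto
          also have "\<dots> \<le> (2 * real l) * q ^ l" using pl by (intro mult_left_mono) auto
          finally show "(2 * real l - 1) * p_jn D l n \<le> a l" unfolding a_def by (simp add: ac_simps)
        qed
        also have "\<dots> \<le> T (mm n + 1)" unfolding T_def using tail_bound[OF asum anonneg True] by simp
        finally show ?thesis using B by linarith
      qed
    qed
    define d where "d n = P.variance (H_tilde X n) - (\<Sum>j=1..nat \<lfloor>2 * h_index D n\<rfloor>. rt_jn D j n * (1 - p_jn D j n))" for n
    have evd: "eventually (\<lambda>n. 0 \<le> d n \<and> d n \<le> T (mm n + 1)) sequentially"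
      using ev1
    proof (rule eventually_mono)
      fix n assume n: "1 \<le> n \<and> 1 \<le> h_index D n"
      have "d n = FF (\<lambda>j. p_jn D j n) n - FF (\<lambda>j. p_jn D j n) (mm n)"
        unfolding d_def rtF VarF[OF conjunct1[OF n]] mm_def ..
      then show "0 \<le> d n \<and> d n \<le> T (mm n + 1)" using key[of n] n by simp
    qed
    have dlim: "d \<longlonglongrightarrow> 0"
      by (rule tendsto_sandwich[OF _ _ tendsto_const Tlim]) (use evd in \<open>auto elim: eventually_mono\<close>)
    have dV: "(\<lambda>n. d n / P.variance (H_tilde X n)) \<longlonglongrightarrow> 0"
    proof (rule Lim_null_comparison)
      show "(\<lambda>n. d n / c) \<longlonglongrightarrow> 0" using dlim by (intro tendsto_divide_zero)
      show "\<forall>\<^sub>F n in sequentially. norm (d n / P.variance (H_tilde X n)) \<le> d n / c"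
        using evd evc
      proof (eventually_elim)
        case (elim n)
        then have "d n / P.variance (H_tilde X n) \<le> d n / c" using c(1)
          by (intro divide_left_mono) auto
        then show ?case using elim c(1) by simp
      qed
    qed
    have "(\<lambda>n. 1 / (1 - d n / P.variance (H_tilde X n))) \<longlonglongrightarrow> 1 / (1 - 0)"
      by (intro tendsto_intros dV) simp
    then have lim1: "(\<lambda>n. 1 / (1 - d n / P.variance (H_tilde X n))) \<longlonglongrightarrow> 1" by simp
    have EQ: "\<forall>\<^sub>F n in sequentially. 1 / (1 - d n / P.variance (H_tilde X n)) =
          P.variance (H_tilde X n) / (\<Sum>j=1..nat \<lfloor>2 * h_index D n\<rfloor>. rt_jn D j n * (1 - p_jn D j n))"
      using evc
    proof (rule eventually_mono)
      fix n assume "c < P.variance (H_tilde X n)"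
      then have "P.variance (H_tilde X n) \<noteq> 0" using c(1) by auto
      then show "1 / (1 - d n / P.variance (H_tilde X n)) =
        P.variance (H_tilde X n) / (\<Sum>j=1..nat \<lfloor>2 * h_index D n\<rfloor>. rt_jn D j n * (1 - p_jn D j n))"
        unfolding d_def by (simp add: field_simps)
    qed
    have A: "(\<lambda>n. P.variance (H_tilde X n) /
               (\<Sum>j=1..nat \<lfloor>2 * h_index D n\<rfloor>. rt_jn D j n * (1 - p_jn D j n))) \<longlonglongrightarrow> 1"
      by (rule Lim_transform_eventually[OF lim1 EQ])
    have Bpart: "\<forall>\<epsilon>>0. (\<lambda>n. measure M {\<omega>\<in>space M.
              \<bar>V_n D X n \<omega> / P.variance (H_tilde X n) - 1\<bar> > \<epsilon>}) \<longlonglongrightarrow> 0"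
    proof (intro allI impI)
      fix \<epsilon> :: real assume \<epsilon>: "\<epsilon> > 0"
      have evT: "eventually (\<lambda>n. T (mm n + 1) < \<epsilon> * c) sequentially"
        using order_tendstoD(2)[OF Tlim] \<epsilon> c(1) by simp
      have expl: "(\<lambda>n. exp (-(11/720) * h_index D n)) \<longlonglongrightarrow> 0"
        using filterlim_compose[OF exp_lim htop] by simp
      have bound: "measure M {\<omega>\<in>space M. \<bar>V_n D X n \<omega> / P.variance (H_tilde X n) - 1\<bar> > \<epsilon>}
          \<le> exp (-(11/720) * h_index D n)"
        if n: "1 \<le> n" "1 \<le> h_index D n" and vc: "c < P.variance (H_tilde X n)"
          and Tn: "T (mm n + 1) < \<epsilon> * c" for n
      proof -
        have f0: "\<And>l. 0 \<le> p_jn D l n" "\<And>l. p_jn D l n \<le> 1" using pb by auto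
        define h where "h = h_index D n"
        define x0 where "x0 = 2 * h / 3"
        have x0: "0 \<le> x0" using n unfolding x0_def h_def by simp
        define G where "G = {\<omega> \<in> space M. real (card {i. i < n \<and> X i \<omega> \<in> {x0..}}) < x0}"
        have Gev: "G \<in> P.events" unfolding G_def card_sum_ind using rv by measurable
        have Var: "P.variance (H_tilde X n) = FF (\<lambda>j. p_jn D j n) n" using VarF n by simp
        have kn: "FF (\<lambda>j. p_jn D j n) n - FF (\<lambda>j. p_jn D j n) (mm n) \<le> T (mm n + 1)"
          using key[OF n] by simp
        have sub: "{\<omega>\<in>space M. \<bar>V_n D X n \<omega> / P.variance (H_tilde X n) - 1\<bar> > \<epsilon>} \<subseteq> G"
        proof
          fix \<omega> assume w: "\<omega> \<in> {\<omega>\<in>space M. \<bar>V_n D X n \<omega> / P.variance (H_tilde X n) - 1\<bar> > \<epsilon>}"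
          show "\<omega> \<in> G"
          proof (rule ccontr)
            assume "\<omega> \<notin> G"
            then have cx: "x0 \<le> real (card {i. i < n \<and> X i \<omega> \<in> {x0..}})" using w unfolding G_def by auto
            have cardle: "card {i. i < n \<and> P i} \<le> n" for P
              using card_mono[of "{..<n}" "{i. i < n \<and> P i}"] by auto
            have Hh: "x0 \<le> H_hat X n \<omega>"
            proof -
              have e: "real n * emp_surv_minus X n \<omega> x = real (card {i. i < n \<and> X i \<omega> \<in> {x..}})" for x
                unfolding emp_surv_minus_def using n by simp
              have bdd: "bdd_above {x. x \<ge> 0 \<and> real n * emp_surv_minus X n \<omega> x \<ge> x}"
              proof (rule bdd_aboveI[where M="real n"])
                fix x assume "x \<in> {x. x \<ge> 0 \<and> real n * emp_surv_minus X n \<omega> x \<ge> x}"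
                then have "x \<le> real (card {i. i < n \<and> X i \<omega> \<in> {x..}})" using e by auto
                also have "\<dots> \<le> real n" using cardle by simp
                finally show "x \<le> real n" .
              qed
              show ?thesis unfolding H_hat_def by (rule cSup_upper[OF _ bdd]) (use x0 cx e in auto)
            qed
            define K where "K = nat \<lfloor>3 * H_hat X n \<omega>\<rfloor>"
            have mK: "mm n \<le> K" unfolding mm_def K_def using Hh unfolding x0_def h_def
              by (intro nat_mono floor_mono) simp
            have VK: "V_n D X n \<omega> = FF (\<lambda>j. p_jn D j n) K"
              unfolding V_n_def Let_def K_def using V_form[of "\<lambda>j. p_jn D j n" "nat \<lfloor>3 * H_hat X n \<omega>\<rfloor>"] by simp
            have F1: "FF (\<lambda>j. p_jn D j n) (mm n) \<le> FF (\<lambda>j. p_jn D j n) K"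
              using FF_bounds[of "\<lambda>j. p_jn D j n" "mm n" K] f0 mK by auto
            have F2: "FF (\<lambda>j. p_jn D j n) K \<le> FF (\<lambda>j. p_jn D j n) n"
            proof (cases "K \<le> n")
              case True then show ?thesis using FF_bounds[of "\<lambda>j. p_jn D j n" K n] f0 by auto
            next
              case False then show ?thesis using FF_const[of "\<lambda>j. p_jn D j n" n K] f0 p_zero by auto
            qed
            have Vpos: "0 < P.variance (H_tilde X n)" using vc c(1) by linarith
            have d1: "0 \<le> P.variance (H_tilde X n) - V_n D X n \<omega>" using VK F2 Var by simp
            have d2: "P.variance (H_tilde X n) - V_n D X n \<omega> < \<epsilon> * P.variance (H_tilde X n)"
            proof -
              have "P.variance (H_tilde X n) - V_n D X n \<omega> \<le> T (mm n + 1)" using VK F1 Var kn by simp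
              also have "\<dots> < \<epsilon> * c" by (rule Tn)
              also have "\<dots> \<le> \<epsilon> * P.variance (H_tilde X n)" using \<epsilon> vc by simp
              finally show ?thesis .
            qed
            have "\<bar>V_n D X n \<omega> / P.variance (H_tilde X n) - 1\<bar> = (P.variance (H_tilde X n) - V_n D X n \<omega>) / P.variance (H_tilde X n)"
              using Vpos d1 by (simp add: field_simps abs_if)
            also have "\<dots> < \<epsilon>" using d2 Vpos by (simp add: field_simps)
            finally show False using w by simp
          qed
        qed
        have "measure M {\<omega>\<in>space M. \<bar>V_n D X n \<omega> / P.variance (H_tilde X n) - 1\<bar> > \<epsilon>} \<le> measure M G"
        proof (cases "{\<omega>\<in>space M. \<bar>V_n D X n \<omega> / P.variance (H_tilde X n) - 1\<bar> > \<epsilon>} \<in> P.events")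
          case True then show ?thesis using sub Gev by (intro P.finite_measure_mono) auto
        next
          case False then show ?thesis by (simp add: measure_notin_sets)
        qed
        also have "measure M G = (\<Sum>y\<in>{y. y \<le> n \<and> real y < x0}. real (n choose y) * measure D {x0..} ^ y * (1 - measure D {x0..}) ^ (n - y))"
          unfolding G_def by (rule P.count_prob[OF rv indep law]) simp
        also have "\<dots> \<le> exp (x0/3 - real n * measure D {x0..} / 4)"
          by (rule low_tail) (use prob_space.prob_le_1[OF PD] in auto)
        also have "\<dots> \<le> exp (-(11/720) * h_index D n)"
        proof -
          have hpos: "19/20 * h < h" using n unfolding h_def by simp
          obtain y where y: "19/20 * h < y" "0 \<le> y" "y \<le> real n * surv_minus D y"
            using h_lt[OF PD hpos[unfolded h_def]] unfolding h_def by blast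
          have "x0 \<le> y" using y n unfolding x0_def h_def by simp
          then have "surv_minus D y \<le> surv_minus D x0" by (rule Sm_anti[OF PD SD])
          then have "real n * surv_minus D y \<le> real n * measure D {x0..}"
            unfolding surv_minus_def by (intro mult_left_mono) auto
          then have "19/20 * h \<le> real n * measure D {x0..}" using y by linarith
          then show ?thesis unfolding x0_def h_def by simp
        qed
        finally show ?thesis .
      qed
      show "(\<lambda>n. measure M {\<omega>\<in>space M. \<bar>V_n D X n \<omega> / P.variance (H_tilde X n) - 1\<bar> > \<epsilon>}) \<longlonglongrightarrow> 0"
      proof (rule tendsto_sandwich[OF _ _ tendsto_const expl])
        show "\<forall>\<^sub>F n in sequentially. 0 \<le> measure M {\<omega>\<in>space M. \<bar>V_n D X n \<omega> / P.variance (H_tilde X n) - 1\<bar> > \<epsilon>}"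
          by simp
        show "\<forall>\<^sub>F n in sequentially. measure M {\<omega>\<in>space M. \<bar>V_n D X n \<omega> / P.variance (H_tilde X n) - 1\<bar> > \<epsilon>}
            \<le> exp (-(11/720) * h_index D n)"
          using ev1 evc evT by eventually_elim (use bound in auto)
      qed
    qed
    show "((\<lambda>n. P.variance (H_tilde X n) /
               (\<Sum>j=1..nat \<lfloor>2 * h_index D n\<rfloor>. rt_jn D j n * (1 - p_jn D j n)))
           \<longlonglongrightarrow> 1)
        \<and> (\<forall>\<epsilon>>0. (\<lambda>n. measure M {\<omega>\<in>space M.
              \<bar>V_n D X n \<omega> / P.variance (H_tilde X n) - 1\<bar> > \<epsilon>}) \<longlonglongrightarrow> 0)"
      using A Bpart by blast
  qed
  show ?thesis using part1 part2 by blast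
qed

end
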